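(* Assume $\delta=d$, $\gamma\ge1$ and $\alpha>0$. Then $\lim_{n\to\infty}d^{-n}\log^+|Q_z^n(w)|=+\infty$ for every $(z,w)\in A_f$, and $$\limsup_{n\to\infty}\frac{1}{d^n}\log^+|Q_z^n(w)|\le\alpha G_p(z)\quad\text{for every }(z,w)\in B_f.$$
   Context: Let $p(z)=z^d+O(z^{d-1})$ be a monic polynomial of degree $\delta=d\ge 2$, and let $q(z,w)=b(z)w^d+(\text{terms of lower degree in } w)$ be a polynomial with $\deg_w q=d$, where $b$ is a monic polynomial of degree $\gamma$. Let $f(z,w)=(p(z),q(z,w))$. Write $Q_z^n=q_{p^{n-1}(z)}\circ\cdots\circ q_{p(z)}\circ q_z$ with $q_z=q(z,\cdot)$, so $f^n(z,w)=(p^n(z),Q_z^n(w))$. Let $A_p=\{z: p^n(z)\to\infty\}$ and $G_p(z)=\lim_n d^{-n}\log^+|p^n(z)|$. Define $\alpha=\max\{(n_j-\gamma)/(d-m_j)\}$ over monomials $z^{n_j}w^{m_j}$ appearing in $q$ with nonzero coefficient and $m_j<d$, and $\alpha=-\infty$ if $q=b(z)w^d$. Let $W_R=\{(z,w):|z|>R,\ |w|>R|z|^\alpha\}$ (if $\alpha=-\infty$: $\{|z|>R,\ w\ne0\}$), fix $R>1$ large enough that $f(W_R)\subset W_R$ and $W_R\subset A_p\times\mathbb{C}$, and set $A_f=\bigcup_{n\ge0}f^{-n}(W_R)$, $B_f=(A_p\times\mathbb{C})\setminus A_f$. *)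

theory Defs
  imports "HOL-Analysis.Analysis" "HOL-Computational_Algebra.Polynomial"
begin

definition qeval :: "(nat \<Rightarrow> nat \<Rightarrow> complex) \<Rightarrow> complex \<Rightarrow> complex \<Rightarrow> complex" where
  "qeval c z w = (\<Sum>(i,j)\<in>{(i,j). c i j \<noteq> 0}. c i j * z ^ i * w ^ j)"

definition logplus :: "real \<Rightarrow> real" where
  "logplus x = max 0 (ln x)"

fun Qiter :: "complex poly \<Rightarrow> (nat \<Rightarrow> nat \<Rightarrow> complex) \<Rightarrow> nat \<Rightarrow> complex \<Rightarrow> complex \<Rightarrow> complex" where
  "Qiter p c 0 z w = w"
| "Qiter p c (Suc n) z w = qeval c ((poly p ^^ n) z) (Qiter p c n z w)"

definition skew :: "complex poly \<Rightarrow> (nat \<Rightarrow> nat \<Rightarrow> complex) \<Rightarrow> complex \<times> complex \<Rightarrow> complex \<times> complex" where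
  "skew p c = (\<lambda>(z,w). (poly p z, qeval c z w))"

text \<open>alpha = max (n_j - gamma)/(d - m_j) over monomials with m_j < d (set assumed nonempty).\<close>
definition alpha :: "(nat \<Rightarrow> nat \<Rightarrow> complex) \<Rightarrow> nat \<Rightarrow> nat \<Rightarrow> real" where
  "alpha c d \<gamma> = Max ((\<lambda>(i,j). (real i - real \<gamma>) / (real d - real j)) ` {(i,j). c i j \<noteq> 0 \<and> j < d})"

definition escape_set :: "complex poly \<Rightarrow> complex set" where
  "escape_set p = {z. filterlim (\<lambda>n. (poly p ^^ n) z) at_infinity sequentially}"

definition Green_p :: "complex poly \<Rightarrow> nat \<Rightarrow> complex \<Rightarrow> real" where
  "Green_p p d z = lim (\<lambda>n. logplus (cmod ((poly p ^^ n) z)) / real d ^ n)"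

definition W_R :: "real \<Rightarrow> real \<Rightarrow> (complex \<times> complex) set" where
  "W_R R a = {(z,w). R < cmod z \<and> R * cmod z powr a < cmod w}"

definition A_f :: "complex poly \<Rightarrow> (nat \<Rightarrow> nat \<Rightarrow> complex) \<Rightarrow> real \<Rightarrow> real \<Rightarrow> (complex \<times> complex) set" where
  "A_f p c R a = (\<Union>n. (skew p c ^^ n) -` W_R R a)"

definition B_f :: "complex poly \<Rightarrow> (nat \<Rightarrow> nat \<Rightarrow> complex) \<Rightarrow> real \<Rightarrow> real \<Rightarrow> (complex \<times> complex) set" where
  "B_f p c R a = (escape_set p \<times> UNIV) - A_f p c R a"

end

theory Submission
  imports Defs "HOL-Computational_Algebra.Fundamental_Theorem_Algebra"
begin


lemma dalembert:
  fixes h :: "complex poly"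
  assumes nc: "\<not> constant (poly h)" and hc: "poly h c \<noteq> 0" and e: "e > 0"
  shows "\<exists>w. cmod (w - c) < e \<and> cmod (poly h w) < cmod (poly h c)"
proof -
  obtain q where q: "psize q = psize h" "\<forall>x. poly q x = poly h (c + x)"
    using poly_offset[of h c] by blast
  then have qnc: "\<not> constant (poly q)"
    by (metis (no_types, opaque_lifting) add.commute constant_def diff_add_cancel nc)
  let ?a0 = "poly q 0"
  have a00: "?a0 \<noteq> 0" using hc q(2) by simp
  from a00 have qr: "\<forall>z. poly q z = poly (smult (inverse ?a0) q) z * ?a0"
    by simp
  let ?r = "smult (inverse ?a0) q"
  have rnc: "\<not> constant (poly ?r)"
    using constant_def qnc qr by fastforce
  have r01: "poly ?r 0 = 1"
    by (simp add: a00)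
  have mrmq_eq: "cmod (poly ?r w) < 1 \<longleftrightarrow> cmod (poly q w) < cmod ?a0" for w
    by (smt (verit, del_insts) a00 mult_less_cancel_right2 norm_mult qr zero_less_norm_iff)
  from poly_decompose[OF rnc] obtain k a s where
    kas: "a \<noteq> 0" "k \<noteq> 0" "psize s + k + 1 = psize ?r"
      "\<forall>z. poly ?r z = poly ?r 0 + z^k* poly (pCons a s) z" by blast
  obtain w where w0: "w ^ k = - 1 / a" using nth_root_exists[of k "- 1 / a"] kas(2) by auto
  have w: "1 + w^k * a = 0" using w0 kas(1) by simp
  from poly_bound_exists[of "cmod w" s] obtain m where
    m: "m > 0" "\<forall>z. cmod z \<le> cmod w \<longrightarrow> cmod (poly s z) \<le> m" by blast
  have "w \<noteq> 0"
    using kas(2) w by (auto simp add: power_0_left)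
  from w have wm1: "w^k * a = - 1"
    by (simp add: add_eq_0_iff)
  have inv0: "0 < inverse (cmod w ^ (k + 1) * m)"
    by (simp add: \<open>w \<noteq> 0\<close> m(1))
  have ew: "0 < e / cmod w" using e \<open>w \<noteq> 0\<close> by simp
  obtain t where t: "t > 0" "t < 1" "t < inverse (cmod w ^ (k + 1) * m)" "t < e / cmod w"
  proof -
    obtain t0 where "t0 > 0" "t0 < 1" "t0 < inverse (cmod w ^ (k + 1) * m)"
      using field_lbound_gt_zero[OF zero_less_one inv0] by blast
    moreover obtain t1 where "t1 > 0" "t1 < t0" "t1 < e / cmod w"
      using field_lbound_gt_zero[OF \<open>t0 > 0\<close> ew] by blast
    ultimately show ?thesis using that[of t1] by auto
  qed
  let ?ct = "complex_of_real t"
  let ?w = "?ct * w"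
  have "1 + ?w^k * (a + ?w * poly s ?w) = 1 + ?ct^k * (w^k * a) + ?w^k * ?w * poly s ?w"
    using kas(1) by (simp add: algebra_simps power_mult_distrib)
  also have "\<dots> = complex_of_real (1 - t^k) + ?w^k * ?w * poly s ?w"
    unfolding wm1 by simp
  finally have "cmod (1 + ?w^k * (a + ?w * poly s ?w)) =
    cmod (complex_of_real (1 - t^k) + ?w^k * ?w * poly s ?w)"
    by metis
  with norm_triangle_ineq[of "complex_of_real (1 - t^k)" "?w^k * ?w * poly s ?w"]
  have 11: "cmod (1 + ?w^k * (a + ?w * poly s ?w)) \<le> \<bar>1 - t^k\<bar> + cmod (?w^k * ?w * poly s ?w)"
    unfolding norm_of_real by simp
  have ath: "\<And>x t::real. 0 \<le> x \<Longrightarrow> x < t \<Longrightarrow> t \<le> 1 \<Longrightarrow> \<bar>1 - t\<bar> + x < 1"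
    by arith
  have tw: "cmod ?w \<le> cmod w"
    by (smt (verit) mult_le_cancel_right2 norm_ge_zero norm_mult norm_of_real t)
  have "t * (cmod w ^ (k + 1) * m) < 1"
    by (smt (verit, best) inv0 inverse_positive_iff_positive left_inverse mult_strict_right_mono t(3))
  with zero_less_power[OF t(1), of k] have 30: "t^k * (t* (cmod w ^ (k + 1) * m)) < t^k"
    by simp
  have "cmod (?w^k * ?w * poly s ?w) = t^k * (t* (cmod w ^ (k + 1) * cmod (poly s ?w)))"
    using \<open>w \<noteq> 0\<close> t(1) by (simp add: algebra_simps norm_power norm_mult)
  with 30 have 120: "cmod (?w^k * ?w * poly s ?w) < t^k"
    by (smt (verit, ccfv_SIG) m(2) mult_left_mono norm_ge_zero t(1) tw zero_le_power)
  from power_strict_mono[OF t(2), of k] t(1) kas(2) have 121: "t^k \<le> 1"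
    by auto
  from ath[OF norm_ge_zero[of "?w^k * ?w * poly s ?w"] 120 121]
  have "cmod (poly ?r ?w) < 1"
    by (smt (verit) "11" kas(4) poly_pCons r01)
  then have "cmod (poly h (c + ?w)) < cmod (poly h c)"
    using mrmq_eq q(2) by (metis add.right_neutral)
  moreover have "cmod (c + ?w - c) < e"
  proof -
    have "cmod (c + ?w - c) = t * cmod w" using t(1) by (simp add: norm_mult)
    also have "\<dots> < e" using t(4) \<open>w \<noteq> 0\<close> by (simp add: field_simps)
    finally show ?thesis .
  qed
  ultimately show ?thesis by blast
qed

lemma minmod:
  fixes h :: "complex poly"
  assumes r: "r > 0" and nz: "\<forall>u. cmod u \<le> r \<longrightarrow> poly h u \<noteq> 0" and u0: "cmod u0 \<le> r"
  shows "\<exists>v. cmod v = r \<and> cmod (poly h v) \<le> cmod (poly h u0)"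
proof -
  have "continuous_on (cball 0 r) (\<lambda>u. cmod (poly h u))"
    by (intro continuous_intros)
  then obtain m where m: "m \<in> cball 0 r" "\<forall>y\<in>cball 0 r. cmod (poly h m) \<le> cmod (poly h y)"
    using continuous_attains_inf[of "cball 0 r" "\<lambda>u. cmod (poly h u)"] r by auto
  show ?thesis
  proof (cases "cmod m = r")
    case True then show ?thesis using m u0 by auto
  next
    case False
    then have mr: "cmod m < r" using m(1) by auto
    show ?thesis
    proof (cases "constant (poly h)")
      case True
      then show ?thesis
        by (intro exI[of _ "complex_of_real r"]) (use r True in \<open>auto simp: constant_def\<close>, metis order_refl)
    next
      case False
      obtain w where w: "cmod (w - m) < r - cmod m" "cmod (poly h w) < cmod (poly h m)"
        using dalembert[OF False, of m "r - cmod m"] nz mr by auto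
      have "cmod w \<le> r"
        using w(1) norm_triangle_ineq2[of w m] by auto
      then have "w \<in> cball 0 r" by (simp add: dist_norm)
      then have False using m(2) w(2) by fastforce
      then show ?thesis ..
    qed
  qed
qed


lemma skew_iter: "(skew p c ^^ n) (z,w) = ((poly p ^^ n) z, Qiter p c n z w)"
  by (induction n) (auto simp: skew_def)

lemma pbound:
  fixes p :: "complex poly"
  assumes "degree p = d" "lead_coeff p = 1" "d \<ge> 1"
  shows "\<exists>Z1\<ge>1. \<forall>z. Z1 \<le> cmod z \<longrightarrow> cmod z ^ d / 2 \<le> cmod (poly p z) \<and> cmod (poly p z) \<le> 2 * cmod z ^ d"
proof -
  define Cp where "Cp = (\<Sum>i<d. cmod (coeff p i))"
  have Cp0: "Cp \<ge> 0" unfolding Cp_def by (simp add: sum_nonneg)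
  have main: "cmod (poly p z - z ^ d) \<le> cmod z ^ d / 2" if z: "2 * Cp + 1 \<le> cmod z" for z
  proof -
    have z1: "1 \<le> cmod z" using z Cp0 by simp
    have "poly p z = (\<Sum>i<Suc d. coeff p i * z ^ i)"
      using assms by (simp add: poly_altdef lessThan_Suc_atMost)
    also have "\<dots> = (\<Sum>i<d. coeff p i * z ^ i) + z ^ d"
      using assms by simp
    finally have "poly p z - z ^ d = (\<Sum>i<d. coeff p i * z ^ i)" by simp
    then have "cmod (poly p z - z ^ d) \<le> (\<Sum>i<d. cmod (coeff p i) * cmod z ^ i)"
      by (metis (no_types, lifting) norm_mult norm_power norm_sum sum.cong)
    also have "\<dots> \<le> (\<Sum>i<d. cmod (coeff p i) * cmod z ^ (d - 1))"
      by (intro sum_mono mult_left_mono power_increasing) (use z1 in auto)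
    also have "\<dots> = Cp * cmod z ^ (d - 1)" by (simp add: Cp_def sum_distrib_right)
    also have "\<dots> \<le> cmod z ^ d / 2"
    proof -
      have "cmod z ^ d = cmod z * cmod z ^ (d - 1)"
        using assms(3) by (metis Suc_diff_1 less_le_trans zero_less_one power_Suc)
      moreover have "2 * Cp * cmod z ^ (d - 1) \<le> cmod z * cmod z ^ (d - 1)"
        by (intro mult_right_mono) (use z in auto)
      ultimately show ?thesis by simp
    qed
    finally show ?thesis .
  qed
  show ?thesis
  proof (intro exI[of _ "2 * Cp + 1"] conjI allI impI)
    fix z assume z: "2 * Cp + 1 \<le> cmod z"
    note m = main[OF z]
    show "cmod z ^ d / 2 \<le> cmod (poly p z)"
      using m norm_triangle_ineq2[of "z ^ d" "poly p z"] by (simp add: norm_power norm_minus_commute)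
    show "cmod (poly p z) \<le> 2 * cmod z ^ d"
    proof -
      have "cmod (poly p z) \<le> cmod (poly p z - z ^ d) + cmod z ^ d"
        using norm_triangle_ineq[of "poly p z - z ^ d" "z ^ d"] by (simp add: norm_power)
      moreover have "0 \<le> cmod z ^ d" by simp
      ultimately show ?thesis using m by linarith
    qed
  qed (use Cp0 in auto)
qed



lemma esc_eventually:
  assumes "filterlim (\<lambda>n. (f n :: complex)) at_infinity sequentially"
  shows "\<exists>N. \<forall>n\<ge>N. B \<le> cmod (f n)"
proof -
  have "filterlim (\<lambda>n. cmod (f n)) at_top sequentially"
    using filterlim_at_infinity_imp_norm_at_top[OF assms] .
  then have "eventually (\<lambda>n. B \<le> cmod (f n)) sequentially"
    by (simp add: filterlim_at_top)
  then show ?thesis by (simp add: eventually_sequentially)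
qed

lemma green_conv:
  fixes p :: "complex poly"
  assumes d2: "d \<ge> 2" and Z1: "Z1 \<ge> 1"
    and bd: "\<forall>z. Z1 \<le> cmod z \<longrightarrow> cmod z ^ d / 2 \<le> cmod (poly p z) \<and> cmod (poly p z) \<le> 2 * cmod z ^ d"
    and esc: "filterlim (\<lambda>n. (poly p ^^ n) z) at_infinity sequentially"
  shows "convergent (\<lambda>n. logplus (cmod ((poly p ^^ n) z)) / real d ^ n)"
proof -
  define zs where "zs n = (poly p ^^ n) z" for n
  define X where "X n = logplus (cmod (zs n)) / real d ^ n" for n
  obtain N where N: "\<forall>n\<ge>N. max Z1 2 \<le> cmod (zs n)"
    using esc_eventually[OF esc] unfolding zs_def by blast
  have zsuc: "zs (Suc n) = poly p (zs n)" for n by (simp add: zs_def)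
  have dpos: "real d > 0" using d2 by simp
  have step: "\<bar>X (Suc n) - X n\<bar> \<le> ln 2 * (1 / real d) ^ n" if n: "n \<ge> N" for n
  proof -
    have a: "max Z1 2 \<le> cmod (zs n)" "max Z1 2 \<le> cmod (zs (Suc n))" using N n by auto
    have zpos: "cmod (zs n) > 0" using a by linarith
    have lp: "logplus (cmod (zs n)) = ln (cmod (zs n))" "logplus (cmod (zs (Suc n))) = ln (cmod (zs (Suc n)))"
      using a by (auto simp: logplus_def)
    have b: "cmod (zs n) ^ d / 2 \<le> cmod (zs (Suc n))" "cmod (zs (Suc n)) \<le> 2 * cmod (zs n) ^ d"
      using bd a(1) zsuc by auto
    have l1: "ln (cmod (zs n) ^ d / 2) \<le> ln (cmod (zs (Suc n)))"
      using b(1) zpos a by (subst ln_le_cancel_iff) auto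
    have l2: "ln (cmod (zs (Suc n))) \<le> ln (2 * cmod (zs n) ^ d)"
      using b(2) zpos a by (subst ln_le_cancel_iff) auto
    have "ln (cmod (zs n) ^ d / 2) = real d * ln (cmod (zs n)) - ln 2"
      using zpos by (simp add: ln_div ln_realpow)
    moreover have "ln (2 * cmod (zs n) ^ d) = ln 2 + real d * ln (cmod (zs n))"
      using zpos by (simp add: ln_mult ln_realpow)
    ultimately have e: "\<bar>ln (cmod (zs (Suc n))) - real d * ln (cmod (zs n))\<bar> \<le> ln 2"
      using l1 l2 by linarith
    have "X (Suc n) - X n = (ln (cmod (zs (Suc n))) - real d * ln (cmod (zs n))) / real d ^ Suc n"
      using dpos unfolding X_def lp by (simp add: field_simps)
    then have "\<bar>X (Suc n) - X n\<bar> \<le> ln 2 / real d ^ Suc n"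
      using e dpos by (simp add: abs_div divide_right_mono)
    also have "\<dots> \<le> ln 2 / real d ^ n"
      using dpos d2 by (intro divide_left_mono) (auto intro!: power_increasing mult_pos_pos)
    finally show ?thesis by (simp add: power_one_over divide_inverse power_inverse)
  qed
  define D where "D n = (if n \<ge> N then X (Suc n) - X n else 0)" for n
  have sD: "summable D"
  proof (rule summable_comparison_test[of _ "\<lambda>n. ln 2 * (1 / real d) ^ n"])
    show "\<exists>N. \<forall>n\<ge>N. norm (D n) \<le> ln 2 * (1 / real d) ^ n"
      using step by (auto simp: D_def)
    show "summable (\<lambda>n. ln 2 * (1 / real d) ^ n)"
      using d2 by (intro summable_mult summable_geometric) auto
  qed
  have eq: "X (n + N) = X N + (\<Sum>k<n + N. D k)" for n
  proof (induction n)
    case 0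
    have "(\<Sum>k<N. D k) = 0" by (simp add: D_def)
    then show ?case by simp
  next
    case (Suc n)
    then show ?case by (simp add: D_def)
  qed
  have "(\<lambda>n. X N + (\<Sum>k<n + N. D k)) \<longlonglongrightarrow> X N + suminf D"
    using LIMSEQ_ignore_initial_segment[OF summable_LIMSEQ[OF sD], of N]
    by (intro tendsto_add) auto
  then have "(\<lambda>n. X (n + N)) \<longlonglongrightarrow> X N + suminf D" using eq by simp
  then have "X \<longlonglongrightarrow> X N + suminf D" by (rule LIMSEQ_offset)
  then show ?thesis unfolding X_def zs_def convergent_def by blast
qed



context
  fixes c :: "nat \<Rightarrow> nat \<Rightarrow> complex" and d \<gamma> :: nat and a :: real
  assumes c_fin: "finite {(i,j). c i j \<noteq> 0}"
    and c_degw: "\<forall>i j. d < j \<longrightarrow> c i j = 0"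
    and b_monic: "c \<gamma> d = 1" and b_deg: "\<forall>i. \<gamma> < i \<longrightarrow> c i d = 0"
    and gamma1: "\<gamma> \<ge> 1"
    and amax: "\<And>i j. c i j \<noteq> 0 \<Longrightarrow> j < d \<Longrightarrow> (real i - real \<gamma>) / (real d - real j) \<le> a"
    and apos: "a > 0"
begin

definition "SS = {(i,j). c i j \<noteq> 0} - {(\<gamma>,d)}"
definition "Cq = (\<Sum>(i,j)\<in>SS. cmod (c i j))"
definition "hp z = (\<Sum>(i,j)\<in>{(i,j). c i j \<noteq> 0}. monom (c i j * z ^ i) (d - j))"

lemma SS_fin: "finite SS" using c_fin by (simp add: SS_def)

lemma Cq_nonneg: "Cq \<ge> 0" unfolding Cq_def by (intro sum_nonneg) auto

lemma SS_cases: "(i,j) \<in> SS \<Longrightarrow> c i j \<noteq> 0 \<and> (j < d \<or> (j = d \<and> i < \<gamma>))"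
proof -
  assume h: "(i,j) \<in> SS"
  then have cij: "c i j \<noteq> 0" and ne: "(i,j) \<noteq> (\<gamma>,d)" by (auto simp: SS_def)
  have jd: "j \<le> d" using c_degw cij not_le by blast
  show ?thesis
  proof (cases "j = d")
    case True
    then have "\<not> \<gamma> < i" using b_deg cij by blast
    moreover have "i \<noteq> \<gamma>" using ne True by simp
    ultimately show ?thesis using True cij by simp
  next
    case False then show ?thesis using jd cij by simp
  qed
qed

lemma qsplit: "qeval c z w = z ^ \<gamma> * w ^ d + (\<Sum>(i,j)\<in>SS. c i j * z ^ i * w ^ j)"
proof -
  have "(\<gamma>,d) \<in> {(i,j). c i j \<noteq> 0}" using b_monic by simp
  then have "qeval c z w = (\<lambda>(i,j). c i j * z ^ i * w ^ j) (\<gamma>,d) + (\<Sum>(i,j)\<in>SS. c i j * z ^ i * w ^ j)"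
    unfolding qeval_def SS_def by (rule sum.remove[OF c_fin])
  then show ?thesis using b_monic by simp
qed

lemma term_bound:
  assumes ij: "(i,j) \<in> SS" and z1: "cmod z \<ge> 1" and wz: "cmod w \<ge> cmod z powr a"
  shows "cmod z ^ i * cmod w ^ j \<le> cmod z ^ \<gamma> * cmod w ^ d * (1 / cmod z + cmod z powr a / cmod w)"
proof -
  have zp: "cmod z > 0" using z1 by linarith
  have wp: "cmod w > 0" using wz zp by (smt (verit) powr_gt_zero)
  have nn: "0 \<le> cmod z ^ \<gamma> * cmod w ^ d" by simp
  from SS_cases[OF ij] consider "j = d" "i < \<gamma>" | "j < d" "c i j \<noteq> 0" by blast
  then show ?thesis
  proof cases
    case 1
    have "cmod z ^ i \<le> cmod z ^ (\<gamma> - 1)" using 1 z1 by (intro power_increasing) auto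
    also have "\<dots> = cmod z ^ \<gamma> / cmod z"
    proof -
      have "cmod z ^ \<gamma> = cmod z * cmod z ^ (\<gamma> - 1)"
        using gamma1 by (metis Suc_diff_1 less_le_trans zero_less_one power_Suc)
      then show ?thesis using zp by simp
    qed

    finally have zi: "cmod z ^ i \<le> cmod z ^ \<gamma> / cmod z" .
    have "cmod z ^ i * cmod w ^ j = cmod w ^ d * cmod z ^ i" using 1 by (simp only: mult.commute)
    also have "\<dots> \<le> cmod w ^ d * (cmod z ^ \<gamma> / cmod z)" by (rule mult_left_mono[OF zi]) simp
    also have "\<dots> = cmod z ^ \<gamma> * cmod w ^ d * (1 / cmod z)" by (simp add: divide_inverse)
    finally have "cmod z ^ i * cmod w ^ j \<le> cmod z ^ \<gamma> * cmod w ^ d * (1 / cmod z)" .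
    also have "\<dots> \<le> cmod z ^ \<gamma> * cmod w ^ d * (1 / cmod z + cmod z powr a / cmod w)"
      using nn wp zp by (intro mult_left_mono) auto
    finally show ?thesis .
  next
    case 2
    define x where "x = ln (cmod z)"
    define y where "y = ln (cmod w)"
    have x0: "x \<ge> 0" using z1 by (simp add: x_def)
    have yax: "y \<ge> a * x"
    proof -
      have "ln (cmod z powr a) \<le> ln (cmod w)" using wz zp wp by (subst ln_le_cancel_iff) auto
      then show ?thesis using zp by (simp add: x_def y_def ln_powr)
    qed
    have dj: "real d - real j > 0" using 2 by simp
    have iga: "real i - real \<gamma> \<le> a * (real d - real j)"
      using amax[OF 2(2) 2(1)] dj by (simp add: divide_le_eq)
    have "(real i - real \<gamma> - a) * x \<le> (a * (real d - real j) - a) * x"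
      using iga x0 by (intro mult_right_mono) auto
    also have "\<dots> = (real d - real j - 1) * (a * x)" by (simp add: algebra_simps)
    also have "\<dots> \<le> (real d - real j - 1) * y"
      using yax 2 by (intro mult_left_mono) auto
    finally have key: "real i * x + real j * y \<le> real \<gamma> * x + real d * y + a * x - y"
      by (simp add: algebra_simps)
    have ez: "exp x = cmod z" "exp y = cmod w" using zp wp by (simp_all add: x_def y_def)
    have "cmod z ^ i * cmod w ^ j = exp (real i * x + real j * y)"
      using ez by (simp add: exp_add exp_of_nat_mult exp_of_nat2_mult)
    also have "\<dots> \<le> exp (real \<gamma> * x + real d * y + a * x - y)" using key by simp
    also have "\<dots> = cmod z ^ \<gamma> * cmod w ^ d * (cmod z powr a / cmod w)"
      using ez zp wp by (simp add: exp_add exp_diff exp_of_nat_mult exp_of_nat2_mult powr_def x_def mult.commute)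
    also have "\<dots> \<le> cmod z ^ \<gamma> * cmod w ^ d * (1 / cmod z + cmod z powr a / cmod w)"
      using nn zp by (intro mult_left_mono) auto
    finally show ?thesis .
  qed
qed

lemma qlower:
  assumes z: "cmod z \<ge> 4 * Cq + 1" and w: "cmod w \<ge> (4 * Cq + 1) * cmod z powr a"
  shows "cmod (qeval c z w) \<ge> cmod z ^ \<gamma> * cmod w ^ d / 2"
proof -
  define K0 where "K0 = 4 * Cq + 1"
  have K0: "K0 \<ge> 1" using Cq_nonneg by (simp add: K0_def)
  have z1: "cmod z \<ge> 1" using z K0 by (simp add: K0_def)
  have zp: "cmod z > 0" using z1 by linarith
  have zap: "cmod z powr a > 0" using zp by simp
  have wz: "cmod w \<ge> cmod z powr a"
  proof -
    have "cmod z powr a \<le> K0 * cmod z powr a" using K0 zap by simp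
    then show ?thesis using w unfolding K0_def by linarith
  qed
  have wp: "cmod w > 0" using wz zap by linarith
  define T where "T = cmod z ^ \<gamma> * cmod w ^ d"
  have T0: "T \<ge> 0" by (simp add: T_def)
  have f1: "1 / cmod z \<le> 1 / K0" using z zp K0 unfolding K0_def[symmetric]
    by (simp add: frac_le)
  have f2: "cmod z powr a / cmod w \<le> 1 / K0" using w wp K0 zap unfolding K0_def[symmetric]
    by (simp add: field_simps)
  have "cmod (\<Sum>(i,j)\<in>SS. c i j * z ^ i * w ^ j) \<le> (\<Sum>(i,j)\<in>SS. cmod (c i j) * (cmod z ^ i * cmod w ^ j))"
    by (rule order_trans[OF norm_sum]) (auto simp: norm_mult norm_power intro!: sum_mono)
  also have "\<dots> \<le> (\<Sum>(i,j)\<in>SS. cmod (c i j) * (T * (1 / cmod z + cmod z powr a / cmod w)))"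
    unfolding T_def using term_bound z1 wz by (intro sum_mono) (auto intro!: mult_left_mono)
  also have "\<dots> = Cq * (T * (1 / cmod z + cmod z powr a / cmod w))"
    by (simp add: Cq_def sum_distrib_right case_prod_unfold)
  also have "\<dots> \<le> Cq * (T * (2 / K0))"
    using f1 f2 T0 Cq_nonneg by (intro mult_left_mono) auto
  also have "\<dots> \<le> T / 2"
  proof -
    have "Cq * 2 / K0 \<le> 1 / 2" using Cq_nonneg K0 by (simp add: K0_def field_simps)
    then have "T * (Cq * 2 / K0) \<le> T * (1/2)" using T0 by (intro mult_left_mono)
    then show ?thesis by (simp add: field_simps)
  qed
  finally have r: "cmod (\<Sum>(i,j)\<in>SS. c i j * z ^ i * w ^ j) \<le> T / 2" .
  have "cmod (z ^ \<gamma> * w ^ d) = T" by (simp add: T_def norm_mult norm_power)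
  then have "T - cmod (\<Sum>(i,j)\<in>SS. c i j * z ^ i * w ^ j) \<le> cmod (qeval c z w)"
    unfolding qsplit using norm_triangle_ineq2[of "z ^ \<gamma> * w ^ d" "- (\<Sum>(i,j)\<in>SS. c i j * z ^ i * w ^ j)"]
    by simp
  then show ?thesis using r unfolding T_def by linarith
qed

lemma hp_poly: "poly (hp z) u = (\<Sum>(i,j)\<in>{(i,j). c i j \<noteq> 0}. c i j * z ^ i * u ^ (d - j))"
  unfolding hp_def by (simp add: poly_sum poly_monom case_prod_unfold)

lemma hp_eq: assumes "u \<noteq> 0" shows "poly (hp z) u = u ^ d * qeval c z (1 / u)"
proof -
  have "poly (hp z) u = (\<Sum>(i,j)\<in>{(i,j). c i j \<noteq> 0}. u ^ d * (c i j * z ^ i * (1 / u) ^ j))"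
    unfolding hp_poly
  proof (intro sum.cong refl, clarify)
    fix i j assume "c i j \<noteq> 0"
    then have "j \<le> d" using c_degw not_le by blast
    then have "u ^ (d - j) = u ^ d * (1 / u) ^ j" using assms by (simp add: power_diff power_one_over divide_inverse power_inverse)
    then show "c i j * z ^ i * u ^ (d - j) = u ^ d * (c i j * z ^ i * (1 / u) ^ j)" by simp
  qed
  also have "\<dots> = u ^ d * qeval c z (1 / u)"
    unfolding qeval_def by (simp add: sum_distrib_left case_prod_unfold)
  finally show ?thesis .
qed

lemma hp_zero: assumes z: "cmod z \<ge> Cq + 1" shows "poly (hp z) 0 \<noteq> 0"
proof -
  have z1: "cmod z \<ge> 1" using z Cq_nonneg by linarith
  have "(\<gamma>,d) \<in> {(i,j). c i j \<noteq> 0}" using b_monic by simp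
  then have "poly (hp z) 0 = (\<lambda>(i,j). c i j * z ^ i * 0 ^ (d - j)) (\<gamma>,d) + (\<Sum>(i,j)\<in>SS. c i j * z ^ i * 0 ^ (d - j))"
    unfolding hp_poly SS_def by (rule sum.remove[OF c_fin])
  then have eq: "poly (hp z) 0 = z ^ \<gamma> + (\<Sum>(i,j)\<in>SS. c i j * z ^ i * 0 ^ (d - j))"
    using b_monic by simp
  have "cmod (\<Sum>(i,j)\<in>SS. c i j * z ^ i * 0 ^ (d - j)) \<le> (\<Sum>(i,j)\<in>SS. cmod (c i j) * cmod z ^ (\<gamma> - 1))"
  proof (rule order_trans[OF norm_sum], rule sum_mono, clarify)
    fix i j assume ij: "(i,j) \<in> SS"
    show "cmod (c i j * z ^ i * 0 ^ (d - j)) \<le> cmod (c i j) * cmod z ^ (\<gamma> - 1)"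
    proof (cases "j = d")
      case True
      then have "i \<le> \<gamma> - 1" using SS_cases[OF ij] by auto
      then have "cmod z ^ i \<le> cmod z ^ (\<gamma> - 1)" using z1 by (intro power_increasing) auto
      then show ?thesis using True by (simp add: norm_mult norm_power mult_left_mono)
    next
      case False
      then have "d - j \<noteq> 0" using SS_cases[OF ij] by auto
      then have h0: "(0::complex) ^ (d - j) = 0" by simp
      have e0: "cmod (c i j * z ^ i * 0 ^ (d - j)) = 0" by (simp only: h0 mult_zero_right norm_zero)
      have "0 \<le> cmod (c i j) * cmod z ^ (\<gamma> - 1)" by simp
      then show ?thesis using e0 by linarith
    qed
  qed
  also have "\<dots> = Cq * cmod z ^ (\<gamma> - 1)"
    by (simp add: Cq_def sum_distrib_right case_prod_unfold)
  also have "\<dots> < cmod z ^ \<gamma>"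
  proof -
    have e: "cmod z ^ \<gamma> = cmod z * cmod z ^ (\<gamma> - 1)"
      using gamma1 by (metis Suc_diff_1 less_le_trans zero_less_one power_Suc)
    have "Cq * cmod z ^ (\<gamma> - 1) < cmod z * cmod z ^ (\<gamma> - 1)"
    proof (rule mult_strict_right_mono)
      show "Cq < cmod z" using z by linarith
      show "0 < cmod z ^ (\<gamma> - 1)" using z1 by (intro zero_less_power) linarith
    qed
    then show ?thesis using e by simp
  qed
  finally have lt: "cmod (\<Sum>(i,j)\<in>SS. c i j * z ^ i * 0 ^ (d - j)) < cmod (z ^ \<gamma>)" by (simp add: norm_power)
  show ?thesis
  proof
    assume "poly (hp z) 0 = 0"
    then have "z ^ \<gamma> = - (\<Sum>(i,j)\<in>SS. c i j * z ^ i * 0 ^ (d - j))" using eq by (simp add: eq_neg_iff_add_eq_0)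
    then have "cmod (z ^ \<gamma>) = cmod (\<Sum>(i,j)\<in>SS. c i j * z ^ i * 0 ^ (d - j))" by (simp only: norm_minus_cancel)
    then show False using lt by linarith
  qed
qed

lemma phase1:
  fixes p :: "complex poly" and R :: real
  assumes d1: "d \<ge> 1" and R0: "R > 0" and W_inv: "skew p c ` W_R R a \<subseteq> W_R R a"
    and zR: "R < cmod z" and hz: "poly (hp z) 0 \<noteq> 0" and wR: "R * cmod z powr a < cmod w"
  shows "R * cmod (poly p z) powr a * (cmod w / (R * cmod z powr a)) ^ d \<le> cmod (qeval c z w)"
proof -
  define \<rho> where "\<rho> = R * cmod z powr a"
  define M where "M = R * cmod (poly p z) powr a"
  have zp: "cmod z > 0" using zR R0 by linarith
  have \<rho>0: "\<rho> > 0" using R0 zp by (simp add: \<rho>_def)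
  have inv: "R < cmod (poly p z) \<and> M < cmod (qeval c z w')" if "\<rho> < cmod w'" for w'
  proof -
    have "(z, w') \<in> W_R R a" using that zR by (simp add: W_R_def \<rho>_def)
    then have "skew p c (z, w') \<in> W_R R a" using W_inv by blast
    then show ?thesis by (simp add: skew_def W_R_def M_def)
  qed
  have pz: "cmod (poly p z) > 0" using inv[of w] wR R0 unfolding \<rho>_def by linarith
  have M0: "M > 0" using pz R0 by (simp add: M_def)
  have w0: "w \<noteq> 0" using wR \<rho>0 unfolding \<rho>_def by auto
  define u0 where "u0 = 1 / w"
  have u0lt: "cmod u0 < 1 / \<rho>" using wR \<rho>0 w0 unfolding u0_def \<rho>_def[symmetric]
    by (simp add: norm_divide frac_less2)
  define x where "x = cmod (poly (hp z) u0)"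
  have claim: "M * r ^ d < x" if r1: "cmod u0 < r" and r2: "r < 1 / \<rho>" for r
  proof -
    have r0: "r > 0" using r1 norm_ge_zero[of u0] by linarith
    have nz: "\<forall>u. cmod u \<le> r \<longrightarrow> poly (hp z) u \<noteq> 0"
    proof (intro allI impI)
      fix u assume u: "cmod u \<le> r"
      show "poly (hp z) u \<noteq> 0"
      proof (cases "u = 0")
        case True then show ?thesis using hz by simp
      next
        case False
        have "1 / \<rho> > cmod u" using u r2 by linarith
        then have "\<rho> < cmod (1 / u)" using False \<rho>0 by (simp add: norm_divide field_simps)
        then have "M < cmod (qeval c z (1 / u))" using inv by blast
        then have "qeval c z (1 / u) \<noteq> 0" using M0 by auto
        then show ?thesis using hp_eq[OF False] False by simp
      qed
    qed
    obtain v where v: "cmod v = r" "cmod (poly (hp z) v) \<le> x"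
      using minmod[OF r0 nz] r1 unfolding x_def by (meson less_imp_le)
    have v0: "v \<noteq> 0" using v(1) r0 by auto
    have "\<rho> < cmod (1 / v)" using v(1) r2 r0 \<rho>0 by (simp add: norm_divide field_simps)
    then have "M < cmod (qeval c z (1 / v))" using inv by blast
    then have "r ^ d * M < r ^ d * cmod (qeval c z (1 / v))" using r0 by simp
    also have "\<dots> = cmod (poly (hp z) v)" using hp_eq[OF v0] v(1) by (simp add: norm_mult norm_power)
    finally show ?thesis using v(2) by (simp add: mult.commute)
  qed
  have xge: "M * (1 / \<rho>) ^ d \<le> x"
  proof (rule ccontr)
    assume "\<not> M * (1 / \<rho>) ^ d \<le> x"
    then have xl: "x < M * (1 / \<rho>) ^ d" by simp
    define y where "y = x / M"
    have y0: "y \<ge> 0" using M0 by (simp add: y_def x_def)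
    have yl: "y < (1 / \<rho>) ^ d" using xl M0 by (simp add: y_def field_simps)
    have dp: "0 < d" using d1 by simp
    have ry: "root d y ^ d = y" using real_root_pow_pos2[OF dp y0] .
    have ry0: "root d y \<ge> 0" using real_root_ge_zero[OF y0] .
    have rl: "root d y < 1 / \<rho>"
    proof (rule ccontr)
      assume "\<not> root d y < 1 / \<rho>"
      then have "(1 / \<rho>) ^ d \<le> root d y ^ d" using \<rho>0 by (intro power_mono) auto
      then show False using ry yl by simp
    qed
    define r where "r = (max (cmod u0) (root d y) + 1 / \<rho>) / 2"
    have r1: "cmod u0 < r" "r < 1 / \<rho>" "root d y < r"
      using u0lt rl unfolding r_def by auto
    have "y < r ^ d" using power_strict_mono[OF r1(3) ry0 dp] ry by simp
    then have "x < M * r ^ d" using M0 by (simp add: y_def field_simps)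
    then show False using claim[OF r1(1) r1(2)] by linarith
  qed
  have "x = cmod (qeval c z w) / cmod w ^ d"
    using hp_eq[of u0 z] w0 unfolding x_def u0_def by (simp add: norm_mult norm_power norm_divide power_one_over)
  then have xw: "x * cmod w ^ d = cmod (qeval c z w)" using w0 by simp
  have "M * (1 / \<rho>) ^ d * cmod w ^ d \<le> x * cmod w ^ d" by (rule mult_right_mono[OF xge]) simp
  then have "M * (1 / \<rho>) ^ d * cmod w ^ d \<le> cmod (qeval c z w)" using xw by simp
  then show ?thesis unfolding M_def \<rho>_def by (simp add: power_divide field_simps)
qed

end


theorem theorem6p3:
  fixes p :: "complex poly" and c :: "nat \<Rightarrow> nat \<Rightarrow> complex"
    and d \<gamma> :: nat and R :: real
  assumes d2: "d \<ge> 2"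
    and p_deg: "degree p = d" and p_monic: "lead_coeff p = 1"
    and c_fin: "finite {(i,j). c i j \<noteq> 0}"
    and c_degw: "\<forall>i j. d < j \<longrightarrow> c i j = 0"
    and b_monic: "c \<gamma> d = 1" and b_deg: "\<forall>i. \<gamma> < i \<longrightarrow> c i d = 0"
    and gamma1: "\<gamma> \<ge> 1"
    and lower_nonempty: "{(i,j). c i j \<noteq> 0 \<and> j < d} \<noteq> {}"
    and alpha_pos: "alpha c d \<gamma> > 0"
    and R1: "R > 1"
    and W_inv: "skew p c ` W_R R (alpha c d \<gamma>) \<subseteq> W_R R (alpha c d \<gamma>)"
    and W_esc: "W_R R (alpha c d \<gamma>) \<subseteq> escape_set p \<times> UNIV"
  shows "(\<forall>(z,w)\<in>A_f p c R (alpha c d \<gamma>).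
            filterlim (\<lambda>n. logplus (cmod (Qiter p c n z w)) / real d ^ n) at_top sequentially)
       \<and> (\<forall>(z,w)\<in>B_f p c R (alpha c d \<gamma>).
            limsup (\<lambda>n. ereal (logplus (cmod (Qiter p c n z w)) / real d ^ n))
              \<le> ereal (alpha c d \<gamma> * Green_p p d z))"
proof -
  define a where "a = alpha c d \<gamma>"
  have apos: "a > 0" using alpha_pos by (simp add: a_def)
  have amax: "(real i - real \<gamma>) / (real d - real j) \<le> a" if "c i j \<noteq> 0" "j < d" for i j
  proof -
    have fin: "finite {(i,j). c i j \<noteq> 0 \<and> j < d}" by (rule finite_subset[OF _ c_fin]) auto
    have "(i,j) \<in> {(i,j). c i j \<noteq> 0 \<and> j < d}" using that by simp
    then show ?thesis unfolding a_def alpha_def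
      by (intro Max_ge finite_imageI fin) force
  qed
  note ctx = c_fin c_degw b_monic b_deg gamma1 amax apos
  have dpos: "real d > 0" "d \<ge> 1" using d2 by auto
  obtain Z1 where Z1: "Z1 \<ge> 1" "\<forall>z. Z1 \<le> cmod z \<longrightarrow> cmod z ^ d / 2 \<le> cmod (poly p z) \<and> cmod (poly p z) \<le> 2 * cmod z ^ d"
    using pbound[OF p_deg p_monic dpos(2)] by blast
  have R0: "R > 0" using R1 by simp
  have lnR: "ln R > 0" using R1 by simp
  have skew_step: "skew p c ((poly p ^^ n) z, Qiter p c n z w) = ((poly p ^^ Suc n) z, Qiter p c (Suc n) z w)" for n z w
    by (simp add: skew_def)
  show ?thesis unfolding a_def[symmetric]
  proof (intro conjI)
    show "\<forall>(z,w)\<in>B_f p c R a.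
            limsup (\<lambda>n. ereal (logplus (cmod (Qiter p c n z w)) / real d ^ n)) \<le> ereal (a * Green_p p d z)"
    proof (clarify)
      fix z w assume B: "(z, w) \<in> B_f p c R a"
      define zs where "zs n = (poly p ^^ n) z" for n
      define ws where "ws n = Qiter p c n z w" for n
      have esc: "filterlim zs at_infinity sequentially" using B by (simp add: B_f_def escape_set_def zs_def[abs_def])
      have notW: "(zs n, ws n) \<notin> W_R R a" for n
        using B skew_iter by (auto simp: B_f_def A_f_def zs_def ws_def)
      define X where "X n = logplus (cmod (zs n)) / real d ^ n" for n
      have "convergent X" unfolding X_def zs_def
        using green_conv[OF d2 Z1(1) Z1(2)] esc unfolding zs_def by blast
      then have XG: "X \<longlonglongrightarrow> Green_p p d z"
      proof -
        have "X = (\<lambda>n. logplus (cmod ((poly p ^^ n) z)) / real d ^ n)" by (simp add: X_def zs_def fun_eq_iff)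
        then show ?thesis using \<open>convergent X\<close> by (simp add: Green_p_def convergent_LIMSEQ_iff)
      qed
      obtain N where N: "\<forall>n\<ge>N. R + 1 \<le> cmod (zs n)" using esc_eventually[OF esc] by blast
      have bound: "logplus (cmod (ws n)) / real d ^ n \<le> ln R / real d ^ n + a * X n" if n: "n \<ge> N" for n
      proof -
        have zn: "R + 1 \<le> cmod (zs n)" using N n by auto
        have zp: "cmod (zs n) > 1" using zn R1 by linarith
        have wle: "cmod (ws n) \<le> R * cmod (zs n) powr a"
          using notW[of n] zn by (auto simp: W_R_def)
        have lz: "logplus (cmod (zs n)) = ln (cmod (zs n))" using zp by (simp add: logplus_def)
        have "zs n \<noteq> 0" using zp by auto
        have lz0: "ln (cmod (zs n)) > 0" using zp by (simp add: ln_gt_zero)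
        have r0: "ln R + a * ln (cmod (zs n)) \<ge> 0" using lnR lz0 apos by simp
        have "logplus (cmod (ws n)) \<le> ln R + a * ln (cmod (zs n))"
        proof (cases "cmod (ws n) > 0")
          case True
          have "ln (cmod (ws n)) \<le> ln (R * cmod (zs n) powr a)"
            using True wle zp R0 by (subst ln_le_cancel_iff) (auto intro!: mult_pos_pos)
          also have "\<dots> = ln R + a * ln (cmod (zs n))" using zp R0 \<open>zs n \<noteq> 0\<close> by (simp add: ln_mult ln_powr)
          finally show ?thesis using r0 by (simp add: logplus_def)
        next
          case False
          then have "cmod (ws n) = 0" by simp
          then show ?thesis using r0 by (simp add: logplus_def)
        qed
        then have "logplus (cmod (ws n)) / real d ^ n \<le> (ln R + a * ln (cmod (zs n))) / real d ^ n"
          using dpos by (intro divide_right_mono) auto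
        then show ?thesis unfolding X_def lz by (simp add: add_divide_distrib)
      qed
      have lim: "(\<lambda>n. ln R / real d ^ n + a * X n) \<longlonglongrightarrow> 0 + a * Green_p p d z"
      proof (intro tendsto_add tendsto_mult_left XG)
        have "(\<lambda>n. inverse (real d ^ n)) \<longlonglongrightarrow> 0"
          using d2 by (intro LIMSEQ_inverse_realpow_zero) auto
        then have "(\<lambda>n. ln R * inverse (real d ^ n)) \<longlonglongrightarrow> 0"
          by (rule tendsto_mult_right_zero)
        then show "(\<lambda>n. ln R / real d ^ n) \<longlonglongrightarrow> 0" by (simp add: divide_inverse)
      qed
      have "limsup (\<lambda>n. ereal (logplus (cmod (ws n)) / real d ^ n))
              \<le> limsup (\<lambda>n. ereal (ln R / real d ^ n + a * X n))"
        using bound by (intro Limsup_mono) (auto simp: eventually_sequentially)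
      also have "\<dots> = ereal (a * Green_p p d z)"
        using lim by (intro lim_imp_Limsup sequentially_bot) (auto intro: tendsto_ereal)
      finally show "limsup (\<lambda>n. ereal (logplus (cmod (Qiter p c n z w)) / real d ^ n)) \<le> ereal (a * Green_p p d z)"
        by (simp add: ws_def)
    qed
  next
    show "\<forall>(z,w)\<in>A_f p c R a.
            filterlim (\<lambda>n. logplus (cmod (Qiter p c n z w)) / real d ^ n) at_top sequentially"
    proof (clarify)
      fix z w assume Af: "(z, w) \<in> A_f p c R a"
      define zs where "zs n = (poly p ^^ n) z" for n
      define ws where "ws n = Qiter p c n z w" for n
      have zsS: "zs (Suc n) = poly p (zs n)" for n by (simp add: zs_def)
      have wsS: "ws (Suc n) = qeval c (zs n) (ws n)" for n by (simp add: zs_def ws_def)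
      obtain N where N: "(zs N, ws N) \<in> W_R R a"
        using Af skew_iter unfolding A_f_def zs_def ws_def by (auto simp: skew_iter)
      have inW: "(zs n, ws n) \<in> W_R R a" if "n \<ge> N" for n
        using that
      proof (induction n rule: dec_induct)
        case base then show ?case using N .
      next
        case (step n)
        have "skew p c (zs n, ws n) \<in> W_R R a" using step.IH W_inv unfolding a_def by blast
        then show ?case by (simp add: skew_def zsS wsS)
      qed
      have zbig: "\<exists>N'. \<forall>n\<ge>N'. B \<le> cmod (zs n)" for B
      proof -
        have "zs N \<in> escape_set p" using W_esc N unfolding a_def by blast
        then have "filterlim (\<lambda>k. (poly p ^^ k) (zs N)) at_infinity sequentially"
          by (simp add: escape_set_def)
        then obtain M where M: "\<forall>k\<ge>M. B \<le> cmod ((poly p ^^ k) (zs N))"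
          using esc_eventually by blast
        have "B \<le> cmod (zs n)" if "n \<ge> M + N" for n
        proof -
          have "(poly p ^^ (n - N)) (zs N) = zs n"
          proof -
            have "(poly p ^^ (n - N)) ((poly p ^^ N) z) = (poly p ^^ (n - N + N)) z" by (simp add: funpow_add)
            also have "n - N + N = n" using that by simp
            finally show ?thesis unfolding zs_def .
          qed
          moreover have "n - N \<ge> M" using that by simp
          ultimately show ?thesis using M by metis
        qed
        then show ?thesis by blast
      qed
      define K where "K = max (4 * Cq c d \<gamma> + 1) (max Z1 3)"
      have K: "K \<ge> 4 * Cq c d \<gamma> + 1" "K \<ge> Z1" "K \<ge> 3" by (auto simp: K_def)
      have Cq0: "Cq c d \<gamma> \<ge> 0" using Cq_nonneg[OF ctx] .
      obtain N0 where N0: "\<forall>n\<ge>N0. K \<le> cmod (zs n)" using zbig by blast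
      define N1 where "N1 = max N N0"
      have zK: "K \<le> cmod (zs n)" if "n \<ge> N1" for n using N0 that by (simp add: N1_def)
      have zR: "R < cmod (zs n)" and wR: "R * cmod (zs n) powr a < cmod (ws n)" if "n \<ge> N" for n
        using inW[OF that] by (auto simp: W_R_def)
      define \<sigma> where "\<sigma> n = cmod (ws n) / (R * cmod (zs n) powr a)" for n
      have den: "R * cmod (zs n) powr a > 0" if "n \<ge> N" for n
        using zR[OF that] R0 by (intro mult_pos_pos) auto
      have \<sigma>1: "\<sigma> n > 1" if "n \<ge> N" for n
        using wR[OF that] den[OF that] by (simp add: \<sigma>_def)
      have step1: "\<sigma> (Suc n) \<ge> \<sigma> n ^ d" if n: "n \<ge> N1" for n
      proof -
        have nN: "n \<ge> N" "Suc n \<ge> N" using n by (auto simp: N1_def)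
        have hz: "poly (hp c d (zs n)) 0 \<noteq> 0"
          using hp_zero[OF ctx] zK[OF n] K Cq0 by force
        have "R * cmod (poly p (zs n)) powr a * (cmod (ws n) / (R * cmod (zs n) powr a)) ^ d \<le> cmod (qeval c (zs n) (ws n))"
          using phase1[OF ctx dpos(2) R0 W_inv[folded a_def] zR[OF nN(1)] hz wR[OF nN(1)]] .
        then have "R * cmod (zs (Suc n)) powr a * \<sigma> n ^ d \<le> cmod (ws (Suc n))"
          by (simp add: zsS wsS \<sigma>_def)
        then show ?thesis using den[OF nN(2)] unfolding \<sigma>_def
          by (simp add: pos_le_divide_eq mult.commute)
      qed
      have mono\<sigma>: "\<sigma> (Suc n) \<ge> \<sigma> n" if n: "n \<ge> N1" for n
      proof -
        have "\<sigma> n \<ge> 1" using \<sigma>1[of n] n by (simp add: N1_def)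
        then have "\<sigma> n ^ 1 \<le> \<sigma> n ^ d" using dpos by (intro power_increasing) auto
        then show ?thesis using step1[OF n] by simp
      qed
      define \<delta> where "\<delta> = \<sigma> N1 - 1"
      have \<delta>0: "\<delta> > 0" using \<sigma>1[of N1] by (simp add: \<delta>_def N1_def)
      have grow: "\<sigma> (N1 + k) \<ge> 1 + (real k + 1) * \<delta>" for k
      proof (induction k)
        case 0 then show ?case by (simp add: \<delta>_def)
      next
        case (Suc k)
        define s where "s = \<sigma> (N1 + k)"
        have s1: "s - 1 \<ge> \<delta>" using Suc.IH \<delta>0 unfolding s_def
          by (smt (verit) mult_le_cancel_right1 of_nat_0_le_iff)
        have sge: "s \<ge> 1" using s1 \<delta>0 by simp
        have "s ^ 2 \<le> s ^ d" using sge d2 by (intro power_increasing) auto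
        then have "s * s \<le> \<sigma> (N1 + Suc k)" using step1[of "N1 + k"] by (simp add: s_def power2_eq_square)
        moreover have "s * (s - 1) \<ge> 1 * (s - 1)" using sge by (intro mult_right_mono) auto
        ultimately have "\<sigma> (N1 + Suc k) \<ge> s + (s - 1)" by (simp add: algebra_simps)
        then show ?case using Suc.IH s1 unfolding s_def by (simp add: algebra_simps)
      qed
      obtain k0 where k0: "K / (R * \<delta>) \<le> real k0" using real_arch_simple by blast
      define n0 where "n0 = N1 + k0"
      have \<sigma>n0: "\<sigma> n0 \<ge> K / R"
      proof -
        have "K / R = (K / (R * \<delta>)) * \<delta>" using \<delta>0 R0 by (simp add: field_simps)
        also have "\<dots> \<le> real k0 * \<delta>" using k0 \<delta>0 by (intro mult_right_mono) auto
        also have "\<dots> \<le> 1 + (real k0 + 1) * \<delta>" using \<delta>0 by (simp add: algebra_simps)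
        also have "\<dots> \<le> \<sigma> n0" using grow[of k0] by (simp add: n0_def)
        finally show ?thesis .
      qed
      have \<sigma>K: "\<sigma> n \<ge> K / R" if "n \<ge> n0" for n
        using that
      proof (induction n rule: dec_induct)
        case base then show ?case using \<sigma>n0 .
      next
        case (step n)
        then show ?case using mono\<sigma>[of n] by (simp add: n0_def)
      qed
      have n0N: "n0 \<ge> N1" "n0 \<ge> N" by (auto simp: n0_def N1_def)
      have wK: "cmod (ws n) \<ge> K * cmod (zs n) powr a" if n: "n \<ge> n0" for n
      proof -
        have nN: "n \<ge> N" using n n0N by simp
        have "K / R \<le> cmod (ws n) / (R * cmod (zs n) powr a)" using \<sigma>K[OF n] by (simp add: \<sigma>_def)
        then have "K / R * (R * cmod (zs n) powr a) \<le> cmod (ws n)"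
          using den[OF nN] by (simp add: pos_le_divide_eq)
        then show ?thesis using R0 by (simp add: field_simps)
      qed
      have zK0: "cmod (zs n) \<ge> 3" "cmod (zs n) \<ge> Z1" "cmod (zs n) \<ge> 4 * Cq c d \<gamma> + 1" if "n \<ge> n0" for n
        using zK[of n] that n0N K by auto
      have ph2: "cmod (ws (Suc n)) \<ge> cmod (zs n) ^ \<gamma> * cmod (ws n) ^ d / 2" if n: "n \<ge> n0" for n
      proof -
        have "(4 * Cq c d \<gamma> + 1) * cmod (zs n) powr a \<le> K * cmod (zs n) powr a"
          using K by (intro mult_right_mono) auto
        then have "(4 * Cq c d \<gamma> + 1) * cmod (zs n) powr a \<le> cmod (ws n)" using wK[OF n] by linarith
        from qlower[OF ctx zK0(3)[OF n] this] show ?thesis by (simp add: wsS)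
      qed
      define L where "L n = ln (cmod (ws n))" for n
      define l where "l n = ln (cmod (zs n))" for n
      have w3: "cmod (ws n) \<ge> 3" if n: "n \<ge> n0" for n
      proof -
        have "cmod (zs n) powr a \<ge> 1" using zK0(1)[OF n] apos by (intro ge_one_powr_ge_zero) auto
        then have "K * cmod (zs n) powr a \<ge> K * 1" using K by (intro mult_left_mono) auto
        then show ?thesis using wK[OF n] K by linarith
      qed
      have Lstep: "L (Suc n) \<ge> real \<gamma> * l n + real d * L n - ln 2" if n: "n \<ge> n0" for n
      proof -
        have zp: "cmod (zs n) > 0" "cmod (ws n) > 0" using zK0(1)[OF n] w3[OF n] by auto
        have "ln (cmod (zs n) ^ \<gamma> * cmod (ws n) ^ d / 2) \<le> L (Suc n)"
        proof -
          have pos: "cmod (zs n) ^ \<gamma> * cmod (ws n) ^ d / 2 > 0" using zp by simp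
          then have "cmod (ws (Suc n)) > 0" using ph2[OF n] by linarith
          then show ?thesis unfolding L_def using ph2[OF n] pos by (subst ln_le_cancel_iff) auto
        qed
        moreover have "ln (cmod (zs n) ^ \<gamma> * cmod (ws n) ^ d / 2) = real \<gamma> * l n + real d * L n - ln 2"
          using zp by (simp add: ln_div ln_mult ln_realpow l_def L_def)
        ultimately show ?thesis by simp
      qed
      have lstep: "l (Suc n) \<ge> real d * l n - ln 2" if n: "n \<ge> n0" for n
      proof -
        have zp: "cmod (zs n) > 0" using zK0(1)[OF n] by auto
        have "cmod (zs n) ^ d / 2 \<le> cmod (zs (Suc n))" using Z1(2) zK0(2)[OF n] zsS by auto
        moreover have pos: "cmod (zs n) ^ d / 2 > 0" using zp by simp
        ultimately have "ln (cmod (zs n) ^ d / 2) \<le> l (Suc n)" unfolding l_def by (subst ln_le_cancel_iff) auto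
        moreover have "ln (cmod (zs n) ^ d / 2) = real d * l n - ln 2" using zp by (simp add: ln_div ln_realpow l_def)
        ultimately show ?thesis by simp
      qed
      define l' where "l' n = l n - ln 2" for n
      have l'step: "l' (Suc n) \<ge> real d * l' n" if n: "n \<ge> n0" for n
      proof -
        have h: "real d * ln 2 \<ge> 2 * ln 2" using d2 by (intro mult_right_mono) auto
        show ?thesis unfolding l'_def right_diff_distrib using h lstep[OF n] by linarith
      qed
      have l0: "l n \<ge> 0" if "n \<ge> n0" for n using zK0(1)[OF that] by (simp add: l_def)
      have l'0: "l' n0 > 0"
      proof -
        have "ln 2 < ln (cmod (zs n0))" using zK0(1)[of n0] by (subst ln_less_cancel_iff) auto
        then show ?thesis by (simp add: l'_def l_def)
      qed
      define g where "g = l' n0 / real d ^ (n0 + 1)"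
      have g0: "g > 0" using l'0 dpos by (simp add: g_def)
      have gk: "l' (n0 + k) / real d ^ (n0 + k + 1) \<ge> g" for k
      proof (induction k)
        case 0 then show ?case by (simp add: g_def)
      next
        case (Suc k)
        have "l' (n0 + k) / real d ^ (n0 + k + 1) = real d * l' (n0 + k) / real d ^ (n0 + Suc k + 1)"
          using dpos by (simp add: field_simps)
        also have "\<dots> \<le> l' (n0 + Suc k) / real d ^ (n0 + Suc k + 1)"
          using l'step[of "n0 + k"] dpos by (intro divide_right_mono) auto
        finally show ?case using Suc.IH by simp
      qed
      define A where "A n = L n / real d ^ n" for n
      have Astep: "A (Suc n) \<ge> A n + l' n / real d ^ (Suc n)" if n: "n \<ge> n0" for n
      proof -
        have "real \<gamma> * l n \<ge> 1 * l n" using gamma1 l0[OF n] by (intro mult_right_mono) auto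
        then have "L (Suc n) \<ge> real d * L n + l' n" using Lstep[OF n] by (simp add: l'_def)
        then have "L (Suc n) / real d ^ Suc n \<ge> (real d * L n + l' n) / real d ^ Suc n"
          using dpos by (intro divide_right_mono) auto
        then show ?thesis using dpos by (simp add: A_def add_divide_distrib)
      qed
      have Ak: "A (n0 + k) \<ge> A n0 + real k * g" for k
      proof (induction k)
        case 0 then show ?case by simp
      next
        case (Suc k)
        have "A (n0 + Suc k) \<ge> A (n0 + k) + l' (n0 + k) / real d ^ Suc (n0 + k)"
          using Astep[of "n0 + k"] by simp
        moreover have "l' (n0 + k) / real d ^ Suc (n0 + k) \<ge> g" using gk[of k] by simp
        ultimately show ?case using Suc.IH by (simp add: algebra_simps)
      qed
      have YA: "logplus (cmod (ws n)) / real d ^ n = A n" if "n \<ge> n0" for n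
        using w3[OF that] by (simp add: logplus_def A_def L_def)
      show "filterlim (\<lambda>n. logplus (cmod (Qiter p c n z w)) / real d ^ n) at_top sequentially"
        unfolding filterlim_at_top
      proof
        fix Z
        obtain k where k: "(Z - A n0) / g \<le> real k" using real_arch_simple by blast
        have "Z \<le> logplus (cmod (Qiter p c n z w)) / real d ^ n" if n: "n \<ge> n0 + k" for n
        proof -
          have "Z - A n0 \<le> real k * g" using k g0 by (simp add: pos_divide_le_eq)
          also have "\<dots> \<le> real (n - n0) * g" using n g0 by (intro mult_right_mono) auto
          finally have "Z \<le> A n0 + real (n - n0) * g" by simp
          also have "\<dots> \<le> A n" using Ak[of "n - n0"] n by simp
          finally show ?thesis using YA[of n] n by (simp add: ws_def)
        qed
        then show "eventually (\<lambda>n. Z \<le> logplus (cmod (Qiter p c n z w)) / real d ^ n) sequentially"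
          by (auto simp: eventually_sequentially)
      qed
    qed
  qed
qed

end
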